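(* Let $\Lambda$ be a smooth section of $\wedge^3(D^* )$, viewed as a 3-form on $Q$ that vanishes upon contraction with vectors in $W$, and let $\Xi$ be the 2-form on $D^*$ obtained by contracting $\tau_{D^*}^*\Lambda$ with any second order vector field on $D^*$; locally $\Xi=\tfrac12 B^\gamma_{\alpha\beta}\pi_\gamma\,\mu^\alpha\wedge\mu^\beta$ where $B_{\alpha\beta\gamma}=\Lambda(X_\alpha,X_\beta,X_\gamma)$ and $B^\gamma_{\alpha\beta}=\mathcal G^{\gamma\delta}B_{\alpha\beta\delta}$ (here $\mu^\alpha$ denotes the pull-back $\tau_{D^*}^*\mu^\alpha$). Then the bundle map $$\mathrm{Id}_{TD^*}+\Pi_{nh}^\sharp\circ\Xi^\flat : TD^*\to TD^*$$ is an invertible endomorphism of $TD^*$.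
   Context: $Q$ is a smooth $n$-manifold with a Riemannian metric $\langle\cdot,\cdot\rangle$ and a smooth function $V$; $D\subset TQ$ is a distribution of constant rank $r<n$. A subbundle $W\subset TQ$ with $TQ=D\oplus W$ is fixed, and $D^*$ is identified with the annihilator $W^\circ\subset T^*Q$; $\tau_{D^*}:D^*\to Q$ is the projection. Indices: $\alpha,\beta,\gamma,\delta\in\{1,\dots,r\}$, $A\in\{r+1,\dots,n\}$, $i,j,k\in\{1,\dots,n\}$, with summation convention. Locally, $X_1,\dots,X_r$ is a basis of sections of $D$ and $X_{r+1},\dots,X_n$ a basis of sections of the metric orthogonal complement $D^\perp$; write $X_j=\rho^i_j\partial_{q^i}$ in coordinates $q^i$ on $Q$ and $[X_i,X_j]=C^k_{ij}X_k$. Put $\mathcal G_{\alpha\beta}=\langle X_\alpha,X_\beta\rangle$ with inverse matrix $\mathcal G^{\alpha\beta}$. Let $\mu^1,\dots,\mu^r$ be the local 1-forms on $Q$ vanishing on $W$ with $\mu^\alpha(X_\beta)=\delta^\alpha_\beta$; the element $\pi_\alpha\mu^\alpha(q)$ of $D^*$ has coordinates $(q^i,\pi_\alpha)$. The nonholonomic bivector on $D^*$ is $\Pi_{nh}=\rho^i_\alpha\partial_{q^i}\wedge\partial_{\pi_\alpha}-\tfrac12C^\gamma_{\alpha\beta}\pi_\gamma\,\partial_{\pi_\alpha}\wedge\partial_{\pi_\beta}$, i.e. $\{q^i,q^j\}=0$, $\{q^i,\pi_\alpha\}=\rho^i_\alpha$, $\{\pi_\alpha,\pi_\beta\}=-C^\gamma_{\alpha\beta}\pi_\gamma$.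 For a bivector $\Pi$, $\Pi^\sharp:T^*D^*\to TD^*$ is defined by $\eta(\Pi^\sharp(\xi))=\Pi(\eta,\xi)$; for a 2-form $\Xi$, $\Xi^\flat(v)=\Xi(v,\cdot)$. A vector field $Z$ on $D^*$ is second order if $T\tau_{D^*}(Z(q,\pi))=\mathcal G^{\alpha\beta}\pi_\beta X_\alpha(q)$ for all $(q,\pi)$. *)

theory Defs
  imports "HOL-Analysis.Analysis"
begin

text \<open>Coordinates q on an open set U of real^'q (n = CARD('q)).
  Indices alpha,beta,... range over the finite type 'd (r = CARD('d)),
  indices A over 'c (n - r = CARD('c)), frame indices j over 'd + 'c
  (Inl alpha = X_alpha spanning D, Inr A = X_A spanning the metric complement).
  A point of D* over the chart is (q, pi) with pi :: real^'d, and tangent vectors /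
  covectors of D* at (q,pi) are pairs (real^'q) x (real^'d) in the coordinates
  (q^i, pi_alpha); covector eta acts on vector v by  fst eta . fst v + snd eta . snd v.\<close>

fun dderiv :: "'a::real_normed_vector list \<Rightarrow> ('a \<Rightarrow> real) \<Rightarrow> 'a \<Rightarrow> real" where
  "dderiv [] f = f"
| "dderiv (v # vs) f = (\<lambda>x. frechet_derivative (dderiv vs f) (at x) v)"

definition smooth_on :: "'a::real_normed_vector set \<Rightarrow> ('a \<Rightarrow> real) \<Rightarrow> bool" where
  "smooth_on U f \<longleftrightarrow> (\<forall>vs. continuous_on U (dderiv vs f) \<and>
                         (\<forall>x\<in>U. dderiv vs f differentiable (at x)))"

definition smooth_vf_on :: "(real^'n) set \<Rightarrow> (real^'n \<Rightarrow> real^'m) \<Rightarrow> bool" where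
  "smooth_vf_on U F \<longleftrightarrow> (\<forall>i. smooth_on U (\<lambda>x. F x $ i))"

definition lie_bracket :: "(real^'n \<Rightarrow> real^'n) \<Rightarrow> (real^'n \<Rightarrow> real^'n) \<Rightarrow> real^'n \<Rightarrow> real^'n" where
  "lie_bracket F G x = frechet_derivative G (at x) (F x) - frechet_derivative F (at x) (G x)"

definition trilinear :: "('a::real_vector \<Rightarrow> 'a \<Rightarrow> 'a \<Rightarrow> real) \<Rightarrow> bool" where
  "trilinear L \<longleftrightarrow> (\<forall>v w. linear (\<lambda>u. L u v w)) \<and> (\<forall>u w. linear (\<lambda>v. L u v w))
                  \<and> (\<forall>u v. linear (\<lambda>w. L u v w))"

definition alternating3 :: "('a \<Rightarrow> 'a \<Rightarrow> 'a \<Rightarrow> real) \<Rightarrow> bool" where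
  "alternating3 L \<longleftrightarrow> (\<forall>u v w. L v u w = - L u v w \<and> L u w v = - L u v w)"

definition pair_cv :: "((real^'q) \<times> (real^'d)) \<Rightarrow> ((real^'q) \<times> (real^'d)) \<Rightarrow> real" where
  "pair_cv eta v = fst eta \<bullet> fst v + snd eta \<bullet> snd v"

text \<open>Nonholonomic bivector at (q,pi):
  Pi_nh = rho^i_alpha d_{q^i} /\ d_{pi_alpha} - 1/2 C^gamma_{alpha beta} pi_gamma d_{pi_alpha} /\ d_{pi_beta},
  with (u /\ v)(eta,xi) = eta(u) xi(v) - eta(v) xi(u) and rho^i_alpha = X_alpha^i.\<close>
definition Pi_nh ::
  "('d + 'c \<Rightarrow> real^'q \<Rightarrow> real^'q) \<Rightarrow> ('d + 'c \<Rightarrow> 'd + 'c \<Rightarrow> 'd + 'c \<Rightarrow> real^'q \<Rightarrow> real)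
   \<Rightarrow> real^'q \<Rightarrow> real^'d \<Rightarrow> ((real^'q) \<times> (real^'d)) \<Rightarrow> ((real^'q) \<times> (real^'d)) \<Rightarrow> real" where
  "Pi_nh X C q p eta xi =
     (\<Sum>i\<in>UNIV. \<Sum>a\<in>UNIV. (X (Inl a) q $ i) *
         (fst eta $ i * snd xi $ a - snd eta $ a * fst xi $ i))
   - (1/2) * (\<Sum>a\<in>UNIV. \<Sum>b\<in>UNIV. \<Sum>c\<in>UNIV. C (Inl c) (Inl a) (Inl b) q * p $ c *
         (snd eta $ a * snd xi $ b - snd eta $ b * snd xi $ a))"

definition bv_sharp :: "(((real^'q) \<times> (real^'d)) \<Rightarrow> ((real^'q) \<times> (real^'d)) \<Rightarrow> real)
    \<Rightarrow> ((real^'q) \<times> (real^'d)) \<Rightarrow> ((real^'q) \<times> (real^'d))" where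
  "bv_sharp P xi = ((\<chi> i. P (axis i 1, 0) xi), (\<chi> a. P (0, axis a 1) xi))"

definition form_flat :: "(((real^'q) \<times> (real^'d)) \<Rightarrow> ((real^'q) \<times> (real^'d)) \<Rightarrow> real)
    \<Rightarrow> ((real^'q) \<times> (real^'d)) \<Rightarrow> ((real^'q) \<times> (real^'d))" where
  "form_flat Xi v = ((\<chi> i. Xi v (axis i 1, 0)), (\<chi> a. Xi v (0, axis a 1)))"

definition Gmat :: "(real^'q \<Rightarrow> real^'q \<Rightarrow> real^'q \<Rightarrow> real) \<Rightarrow> ('d + 'c \<Rightarrow> real^'q \<Rightarrow> real^'q)
    \<Rightarrow> real^'q \<Rightarrow> real^'d^'d" where
  "Gmat g X q = (\<chi> a b. g q (X (Inl a) q) (X (Inl b) q))"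

definition Bup :: "(real^'q::finite \<Rightarrow> real^'q \<Rightarrow> real^'q \<Rightarrow> real^'q \<Rightarrow> real)
    \<Rightarrow> (real^'q \<Rightarrow> real^'q \<Rightarrow> real^'q \<Rightarrow> real) \<Rightarrow> ('d + 'c \<Rightarrow> real^'q \<Rightarrow> real^'q)
    \<Rightarrow> real^'q \<Rightarrow> 'd::finite \<Rightarrow> 'd \<Rightarrow> 'd \<Rightarrow> real" where
  "Bup Lam g X q c a b =
     (\<Sum>d\<in>UNIV. matrix_inv (Gmat g X q) $ c $ d * Lam q (X (Inl a) q) (X (Inl b) q) (X (Inl d) q))"

text \<open>Xi = 1/2 B^gamma_{alpha beta} pi_gamma mu^alpha /\ mu^beta, mu^alpha pulled back by tau
  (so mu^alpha(v) only sees the base component fst v).\<close>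
definition Xi_form :: "(real^'q \<Rightarrow> real^'q \<Rightarrow> real^'q \<Rightarrow> real^'q \<Rightarrow> real)
    \<Rightarrow> (real^'q \<Rightarrow> real^'q \<Rightarrow> real^'q \<Rightarrow> real) \<Rightarrow> ('d + 'c \<Rightarrow> real^'q \<Rightarrow> real^'q)
    \<Rightarrow> ('d \<Rightarrow> real^'q \<Rightarrow> real^'q) \<Rightarrow> real^'q \<Rightarrow> real^'d
    \<Rightarrow> ((real^'q) \<times> (real^'d)) \<Rightarrow> ((real^'q) \<times> (real^'d)) \<Rightarrow> real" where
  "Xi_form Lam g X mu q p v w =
     (1/2) * (\<Sum>a\<in>UNIV. \<Sum>b\<in>UNIV. \<Sum>c\<in>UNIV. Bup Lam g X q c a b * p $ c *
        ((mu a q \<bullet> fst v) * (mu b q \<bullet> fst w) - (mu b q \<bullet> fst v) * (mu a q \<bullet> fst w)))"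

end

theory Submission
  imports Defs
begin
lemma axis_sum: "(\<Sum>a\<in>UNIV. f a * (axis i (1::real) $ a * y)) = f i * y"
proof -
  have "(\<Sum>a\<in>UNIV. f a * (axis i (1::real) $ a * y)) = (\<Sum>a\<in>UNIV. if i = a then f i * y else 0)"
    by (rule sum.cong) (auto simp: axis_def)
  then show ?thesis by simp
qed
lemma sharp_eq: "bv_sharp (Pi_nh X C q p) (xi, 0) = (0, \<chi> a. - (\<Sum>i\<in>UNIV. X (Inl a) q $ i * xi $ i))"
  unfolding bv_sharp_def Pi_nh_def
  by (simp add: vec_eq_iff sum_negf axis_sum)
lemma flat_snd: "snd (form_flat (Xi_form Lam g X mu q p) v) = 0"
  unfolding form_flat_def Xi_form_def by (simp add: vec_eq_iff)
lemma tri_add: "(\<Sum>a\<in>A. \<Sum>b\<in>B. \<Sum>c\<in>Cs. K a b c * ((m a \<bullet> (u+v)) * y b - (m b \<bullet> (u+v)) * y a))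
  = (\<Sum>a\<in>A. \<Sum>b\<in>B. \<Sum>c\<in>Cs. K a b c * ((m a \<bullet> u) * y b - (m b \<bullet> u) * y a))
  + (\<Sum>a\<in>A. \<Sum>b\<in>B. \<Sum>c\<in>Cs. K a b c * ((m a \<bullet> v) * y b - (m b \<bullet> v) * y a))"
proof -
  have pt: "K a b c * ((m a \<bullet> (u+v)) * y b - (m b \<bullet> (u+v)) * y a)
    = K a b c * ((m a \<bullet> u) * y b - (m b \<bullet> u) * y a) + K a b c * ((m a \<bullet> v) * y b - (m b \<bullet> v) * y a)" for a b c
    by (simp add: inner_add_right algebra_simps)
  show ?thesis by (simp only: pt sum.distrib)
qed
lemma flat_fst_add: "fst (form_flat (Xi_form Lam g X mu q p) (u+v)) = fst (form_flat (Xi_form Lam g X mu q p) u) + fst (form_flat (Xi_form Lam g X mu q p) v)"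
  unfolding form_flat_def Xi_form_def
  apply (simp only: fst_conv vec_eq_iff)
  apply (simp only: vector_add_component vec_lambda_beta fst_add)
  apply (simp only: mult.assoc[symmetric] tri_add[where K="\<lambda>a b c. Bup Lam g X q c a b * p $ c"])
  apply (simp add: algebra_simps)
  done
lemma flat_fst_scale: "fst (form_flat (Xi_form Lam g X mu q p) (c *\<^sub>R v)) = c *\<^sub>R fst (form_flat (Xi_form Lam g X mu q p) v)"
  unfolding form_flat_def Xi_form_def by (simp add: vec_eq_iff algebra_simps sum_distrib_left)

theorem lemma3p1:
  fixes U :: "(real^'q::finite) set"
    and X :: "'d::finite + 'c::finite \<Rightarrow> real^'q \<Rightarrow> real^'q"
    and C :: "'d + 'c \<Rightarrow> 'd + 'c \<Rightarrow> 'd + 'c \<Rightarrow> real^'q \<Rightarrow> real"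
    and g :: "real^'q \<Rightarrow> real^'q \<Rightarrow> real^'q \<Rightarrow> real"
    and Wv :: "'c \<Rightarrow> real^'q \<Rightarrow> real^'q"
    and mu :: "'d \<Rightarrow> real^'q \<Rightarrow> real^'q"
    and Lam :: "real^'q \<Rightarrow> real^'q \<Rightarrow> real^'q \<Rightarrow> real^'q \<Rightarrow> real"
  assumes U_open: "open U"
    and dim: "CARD('q) = CARD('d) + CARD('c)"
    and g_smooth: "\<And>u v. smooth_on U (\<lambda>q. g q u v)"
    and g_bilin: "\<And>q. q \<in> U \<Longrightarrow> bilinear (g q)"
    and g_sym: "\<And>q u v. q \<in> U \<Longrightarrow> g q u v = g q v u"
    and g_pos: "\<And>q v. q \<in> U \<Longrightarrow> v \<noteq> 0 \<Longrightarrow> g q v v > 0"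
    and X_smooth: "\<And>j. smooth_vf_on U (X j)"
    and X_frame: "\<And>q. q \<in> U \<Longrightarrow> inj (\<lambda>j. X j q) \<and> independent (range (\<lambda>j. X j q))"
    and X_perp: "\<And>q a A. q \<in> U \<Longrightarrow> g q (X (Inl a) q) (X (Inr A) q) = 0"
    and C_bracket: "\<And>q i j. q \<in> U \<Longrightarrow>
        lie_bracket (X i) (X j) q = (\<Sum>k\<in>UNIV. C k i j q *\<^sub>R X k q)"
    and W_smooth: "\<And>A. smooth_vf_on U (Wv A)"
    and W_compl: "\<And>q. q \<in> U \<Longrightarrow>
        inj (\<lambda>j. case j of Inl a \<Rightarrow> X (Inl a) q | Inr A \<Rightarrow> Wv A q)
        \<and> independent (range (\<lambda>j. case j of Inl a \<Rightarrow> X (Inl a) q | Inr A \<Rightarrow> Wv A q))"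
    and mu_smooth: "\<And>a. smooth_vf_on U (mu a)"
    and mu_dual: "\<And>q a b. q \<in> U \<Longrightarrow> mu a q \<bullet> X (Inl b) q = (if a = b then 1 else 0)"
    and mu_W: "\<And>q a A. q \<in> U \<Longrightarrow> mu a q \<bullet> Wv A q = 0"
    and Lam_smooth: "\<And>u v w. smooth_on U (\<lambda>q. Lam q u v w)"
    and Lam_tri: "\<And>q. q \<in> U \<Longrightarrow> trilinear (Lam q)"
    and Lam_alt: "\<And>q. q \<in> U \<Longrightarrow> alternating3 (Lam q)"
    and Lam_W: "\<And>q A v w. q \<in> U \<Longrightarrow> Lam q (Wv A q) v w = 0"
  shows "\<forall>q\<in>U. \<forall>p :: real^'d.
     linear (\<lambda>v. v + bv_sharp (Pi_nh X C q p) (form_flat (Xi_form Lam g X mu q p) v))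
   \<and> bij (\<lambda>v. v + bv_sharp (Pi_nh X C q p) (form_flat (Xi_form Lam g X mu q p) v))"
proof (intro ballI allI)
  fix q p
  let ?F = "form_flat (Xi_form Lam g X mu q p)"
  define h where "h = (\<lambda>v::real^'q. (\<chi> a. - (\<Sum>i\<in>UNIV. X (Inl a) q $ i * fst (?F (v, 0::real^'d)) $ i)) :: real^'d)"
  have F0: "fst (?F v) = fst (?F (fst v, 0))" for v
    unfolding form_flat_def Xi_form_def by simp
  have T: "v + bv_sharp (Pi_nh X C q p) (?F v) = (fst v, snd v + h (fst v))" for v
  proof -
    have eq: "?F v = (fst (?F (fst v, 0)), 0)" using F0 flat_snd by (metis prod.collapse)
    show ?thesis unfolding h_def by (subst eq, simp add: sharp_eq prod_eq_iff)
  qed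
  have hadd: "h (x + y) = h x + h y" for x y
  proof -
    have "fst (?F (x+y, 0)) = fst (?F (x,0)) + fst (?F (y,0))"
      using flat_fst_add[of Lam g X mu q p "(x,0)" "(y,0)"] by simp
    then show ?thesis unfolding h_def by (simp add: vec_eq_iff algebra_simps sum.distrib)
  qed
  have hsc: "h (c *\<^sub>R x) = c *\<^sub>R h x" for c x
  proof -
    have "fst (?F (c *\<^sub>R x, 0)) = c *\<^sub>R fst (?F (x,0))"
      using flat_fst_scale[of Lam g X mu q p c "(x,0)"] by simp
    then show ?thesis unfolding h_def by (simp add: vec_eq_iff algebra_simps sum_distrib_left)
  qed
  show "linear (\<lambda>v. v + bv_sharp (Pi_nh X C q p) (?F v)) \<and> bij (\<lambda>v. v + bv_sharp (Pi_nh X C q p) (?F v))"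
    unfolding T
  proof
    show "linear (\<lambda>v::(real^'q)\<times>(real^'d). (fst v, snd v + h (fst v)))"
      by (rule linearI) (auto simp: hadd hsc algebra_simps)
    show "bij (\<lambda>v::(real^'q)\<times>(real^'d). (fst v, snd v + h (fst v)))"
      by (rule o_bij[where g="\<lambda>v. (fst v, snd v - h (fst v))"]) (auto simp: fun_eq_iff)
  qed
qed

end
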